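(* For all integers $n\ge k\ge1$, $$L_{m,\bar{\alpha}}(n+1,k)=L_{m,\bar{\alpha}}(n,k-1)+\bigl(\alpha_k+\alpha_n+(k+n)m\bigr)L_{m,\bar{\alpha}}(n,k),$$ and for all $n\ge0$, $$L_{m,\bar{\alpha}}(n,0)=\prod_{i=0}^{n-1}(\alpha_0+\alpha_i+im).$$
   Context: Fix a real number $m$ and a sequence $\bar{\alpha}=(\alpha_0,\alpha_1,\ldots)$ of real numbers. Let $(x;\bar{\alpha}|m)_n=\prod_{j=0}^{n-1}(x-\alpha_j-jm)$, with $(x;\bar{\alpha}|m)_0=1$. The $\bar{\alpha}$-Whitney numbers of the first kind $w_{m,\bar{\alpha}}(n,k)$ and second kind $W_{m,\bar{\alpha}}(n,k)$ are defined by the polynomial identities $(x;\bar{\alpha}|m)_n=\sum_{k=0}^n w_{m,\bar{\alpha}}(n,k)x^k$ and $x^n=\sum_{k=0}^n W_{m,\bar{\alpha}}(n,k)(x;\bar{\alpha}|m)_k$, both vanishing for $k>n$ or $k<0$. The $\bar{\alpha}$-Whitney-Lah numbers are $$L_{m,\bar{\alpha}}(n,k)=\sum_{j=k}^{n}(-1)^{n-j}\,w_{m,\bar{\alpha}}(n,j)\,W_{m,\bar{\alpha}}(j,k),$$ with $L_{m,\bar{\alpha}}(0,0)=1$ and $L_{m,\bar{\alpha}}(n,k)=0$ for $n<k$ or $k<0$. An empty product equals $1$. *)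

theory Defs
  imports "HOL-Computational_Algebra.Polynomial"
begin

definition gfact :: "real \<Rightarrow> (nat \<Rightarrow> real) \<Rightarrow> nat \<Rightarrow> real poly" where
  "gfact m \<alpha> n = (\<Prod>j<n. [:-(\<alpha> j + real j * m), 1:])"

definition wfirst :: "real \<Rightarrow> (nat \<Rightarrow> real) \<Rightarrow> nat \<Rightarrow> nat \<Rightarrow> real" where
  "wfirst m \<alpha> n k = coeff (gfact m \<alpha> n) k"

definition Wsecond :: "real \<Rightarrow> (nat \<Rightarrow> real) \<Rightarrow> nat \<Rightarrow> nat \<Rightarrow> real" where
  "Wsecond m \<alpha> n = (THE c. (\<forall>k>n. c k = 0) \<and>
      monom 1 n = (\<Sum>k\<le>n. smult (c k) (gfact m \<alpha> k)))"

definition WLah :: "real \<Rightarrow> (nat \<Rightarrow> real) \<Rightarrow> nat \<Rightarrow> nat \<Rightarrow> real" where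
  "WLah m \<alpha> n k = (if k \<le> n then
      (\<Sum>j=k..n. (-1) ^ (n - j) * wfirst m \<alpha> n j * Wsecond m \<alpha> j k) else 0)"

end

theory Submission
  imports Defs
begin

lemma gfact_0[simp]: "gfact m \<alpha> 0 = 1"
  by (simp add: gfact_def)

lemma gfact_Suc: "gfact m \<alpha> (Suc k) = gfact m \<alpha> k * [:-(\<alpha> k + real k * m), 1:]"
  by (simp add: gfact_def)

lemma gfact_deg: "degree (gfact m \<alpha> k) = k \<and> coeff (gfact m \<alpha> k) k = 1"
proof (induction k)
  case 0 then show ?case by simp
next
  case (Suc k)
  have nz: "gfact m \<alpha> k \<noteq> 0" using Suc by auto
  have d: "degree (gfact m \<alpha> (Suc k)) = Suc k"
    unfolding gfact_Suc using Suc nz by (subst degree_mult_eq) auto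
  have "coeff (gfact m \<alpha> (Suc k)) (Suc k) = lead_coeff (gfact m \<alpha> (Suc k))" using d by simp
  also have "\<dots> = 1" unfolding gfact_Suc lead_coeff_mult using Suc by simp
  finally show ?case using d by simp
qed

lemma gfact_coeff_big: "k < i \<Longrightarrow> coeff (gfact m \<alpha> k) i = 0"
  using gfact_deg[of m \<alpha> k] by (simp add: coeff_eq_0)

lemma uniq0: "(\<Sum>k\<le>N. smult (e k) (gfact m \<alpha> k)) = 0 \<Longrightarrow> \<forall>k\<le>N. e k = 0"
proof (induction N)
  case 0 then show ?case by simp
next
  case (Suc N)
  have "coeff (\<Sum>k\<le>Suc N. smult (e k) (gfact m \<alpha> k)) (Suc N) = e (Suc N)"
    using gfact_deg[of m \<alpha> "Suc N"]
    by (simp add: coeff_sum gfact_coeff_big)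
  then have e: "e (Suc N) = 0" unfolding Suc.prems by simp
  then have "(\<Sum>k\<le>N. smult (e k) (gfact m \<alpha> k)) = 0" using Suc.prems by simp
  then show ?case using Suc.IH e by (auto simp: le_Suc_eq)
qed

lemma uniq:
  assumes "(\<Sum>k\<le>N. smult (c k) (gfact m \<alpha> k)) = (\<Sum>k\<le>N. smult (d k) (gfact m \<alpha> k))"
    and "k \<le> N"
  shows "c k = d k"
proof -
  have "(\<Sum>k\<le>N. smult (c k - d k) (gfact m \<alpha> k)) = 0"
    using assms(1) by (simp add: smult_diff_left sum_subtractf)
  from uniq0[OF this] assms(2) show ?thesis by simp
qed

lemma exist: "degree p \<le> n \<Longrightarrow> \<exists>c. p = (\<Sum>k\<le>n. smult (c k) (gfact m \<alpha> k))"
proof (induction n arbitrary: p)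
  case 0
  then have "p = [:coeff p 0:]" by (metis degree_0_id le_zero_eq)
  then show ?case by (intro exI[of _ "\<lambda>_. coeff p 0"]) simp
next
  case (Suc n)
  define q where "q = p - smult (coeff p (Suc n)) (gfact m \<alpha> (Suc n))"
  have "degree q \<le> n"
  proof (rule degree_le, intro allI impI)
    fix i assume "n < i"
    show "coeff q i = 0"
    proof (cases "i = Suc n")
      case True then show ?thesis using gfact_deg[of m \<alpha> "Suc n"] by (simp add: q_def)
    next
      case False
      then have "Suc n < i" using \<open>n < i\<close> by simp
      then show ?thesis using Suc.prems gfact_coeff_big[of "Suc n" i m \<alpha>]
        by (simp add: q_def coeff_eq_0)
    qed
  qed
  from Suc.IH[OF this] obtain c where c: "q = (\<Sum>k\<le>n. smult (c k) (gfact m \<alpha> k))" by blast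
  define c' where "c' k = (if k = Suc n then coeff p (Suc n) else c k)" for k
  have "(\<Sum>k\<le>n. smult (c' k) (gfact m \<alpha> k)) = (\<Sum>k\<le>n. smult (c k) (gfact m \<alpha> k))"
    by (rule sum.cong) (auto simp: c'_def)
  then have "p = (\<Sum>k\<le>Suc n. smult (c' k) (gfact m \<alpha> k))"
    using c by (simp add: q_def c'_def)
  then show ?case by blast
qed

lemma Wsecond_prop:
  "(\<forall>k>n. Wsecond m \<alpha> n k = 0) \<and>
   monom 1 n = (\<Sum>k\<le>n. smult (Wsecond m \<alpha> n k) (gfact m \<alpha> k))"
proof -
  let ?P = "\<lambda>c. (\<forall>k>n. c k = 0) \<and> monom 1 n = (\<Sum>k\<le>n. smult (c k) (gfact m \<alpha> k))"
  obtain c where c: "monom (1::real) n = (\<Sum>k\<le>n. smult (c k) (gfact m \<alpha> k))"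
    using exist[where p="monom (1::real) n" and n=n and m=m and \<alpha>=\<alpha>] by (auto simp: degree_monom_le)
  define c' where "c' k = (if k \<le> n then c k else 0)" for k
  have "(\<Sum>k\<le>n. smult (c' k) (gfact m \<alpha> k)) = (\<Sum>k\<le>n. smult (c k) (gfact m \<alpha> k))"
    by (rule sum.cong) (auto simp: c'_def)
  then have ex: "?P c'" using c by (auto simp: c'_def)
  have "\<exists>!c. ?P c"
  proof (rule ex1I[of _ c'])
    fix d assume d: "?P d"
    show "d = c'"
    proof
      fix k show "d k = c' k"
      proof (cases "k \<le> n")
        case True then show ?thesis using uniq[where N=n and c=d and m=m and \<alpha>=\<alpha> and d=c' and k=k] d ex by simp
      next
        case False then show ?thesis using d ex by simp
      qed
    qed
  qed (rule ex)
  from theI'[OF this] show ?thesis unfolding Wsecond_def by simp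
qed

lemma smult_sum_r: "smult a (sum f S) = (\<Sum>x\<in>S. smult a (f x))"
  by (induction S rule: infinite_finite_induct) (simp_all add: smult_add_right)

lemma coeff_mult_lin:
  fixes p :: "real poly"
  shows "coeff (p * [:b, 1:]) j = b * coeff p j + (case j of 0 \<Rightarrow> 0 | Suc i \<Rightarrow> coeff p i)"
  by (cases j) (simp_all add: mult_pCons_right coeff_pCons)

definition Pr :: "real \<Rightarrow> (nat \<Rightarrow> real) \<Rightarrow> nat \<Rightarrow> real poly" where
  "Pr m \<alpha> n = (\<Prod>j<n. [:\<alpha> j + real j * m, 1:])"

lemma Pr_Suc: "Pr m \<alpha> (Suc n) = Pr m \<alpha> n * [:\<alpha> n + real n * m, 1:]"
  by (simp add: Pr_def)

lemma Pr_coeff: "coeff (Pr m \<alpha> n) j = (-1) ^ (n + j) * coeff (gfact m \<alpha> n) j"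
proof (induction n arbitrary: j)
  case 0 then show ?case by (cases j) (auto simp: Pr_def)
next
  case (Suc n)
  have g: "gfact m \<alpha> (Suc n) = gfact m \<alpha> n * [:- (\<alpha> n + real n * m), 1:]"
    by (rule gfact_Suc)
  show ?case
    unfolding Pr_Suc g coeff_mult_lin Suc.IH
    by (cases j) (auto simp: algebra_simps)
qed

lemma Pr_monom: "Pr m \<alpha> n = (\<Sum>j\<le>n. smult ((-1) ^ (n - j) * wfirst m \<alpha> n j) (monom 1 j))"
proof (rule poly_eqI)
  fix i
  have r: "coeff (\<Sum>j\<le>n. smult ((-1) ^ (n - j) * wfirst m \<alpha> n j) (monom 1 j)) i
      = (if i \<le> n then (-1) ^ (n - i) * wfirst m \<alpha> n i else 0)"
    by (simp add: coeff_sum coeff_monom if_distrib[where f="\<lambda>x. _ * x"] cong: if_cong)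
  show "coeff (Pr m \<alpha> n) i = coeff (\<Sum>j\<le>n. smult ((-1) ^ (n - j) * wfirst m \<alpha> n j) (monom 1 j)) i"
  proof (cases "i \<le> n")
    case True
    have "(-1::real) ^ (n + i) = (-1) ^ (n - i)"
    proof -
      have "n + i = (n - i) + 2 * i" using True by simp
      then show ?thesis by (simp only: power_add power_mult) simp
    qed
    then show ?thesis using True unfolding r Pr_coeff by (simp add: wfirst_def)
  next
    case False then show ?thesis by (simp add: r Pr_coeff gfact_coeff_big)
  qed
qed

lemma Pr_WLah: "Pr m \<alpha> n = (\<Sum>k\<le>n. smult (WLah m \<alpha> n k) (gfact m \<alpha> k))"
proof -
  let ?a = "\<lambda>j. (-1) ^ (n - j) * wfirst m \<alpha> n j"
  let ?W = "Wsecond m \<alpha>"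
  have "Pr m \<alpha> n = (\<Sum>j\<le>n. smult (?a j) (\<Sum>k\<le>j. smult (?W j k) (gfact m \<alpha> k)))"
    unfolding Pr_monom using Wsecond_prop by metis
  also have "\<dots> = (\<Sum>j\<le>n. \<Sum>k\<le>n. smult (?a j * ?W j k) (gfact m \<alpha> k))"
  proof (rule sum.cong[OF refl])
    fix j assume j: "j \<in> {..n}"
    have "(\<Sum>k\<le>j. smult (?W j k) (gfact m \<alpha> k)) = (\<Sum>k\<le>n. smult (?W j k) (gfact m \<alpha> k))"
      by (rule sum.mono_neutral_left) (use j Wsecond_prop in auto)
    then show "smult (?a j) (\<Sum>k\<le>j. smult (?W j k) (gfact m \<alpha> k))
        = (\<Sum>k\<le>n. smult (?a j * ?W j k) (gfact m \<alpha> k))"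
      by (simp add: smult_sum_r)
  qed
  also have "\<dots> = (\<Sum>k\<le>n. \<Sum>j\<le>n. smult (?a j * ?W j k) (gfact m \<alpha> k))"
    by (rule sum.swap)
  also have "\<dots> = (\<Sum>k\<le>n. smult (WLah m \<alpha> n k) (gfact m \<alpha> k))"
  proof (rule sum.cong[OF refl])
    fix k assume k: "k \<in> {..n}"
    have "(\<Sum>j\<le>n. ?a j * ?W j k) = (\<Sum>j=k..n. ?a j * ?W j k)"
      by (rule sum.mono_neutral_right) (use k Wsecond_prop in auto)
    then have "(\<Sum>j\<le>n. ?a j * ?W j k) = WLah m \<alpha> n k" using k by (simp add: WLah_def)
    then show "(\<Sum>j\<le>n. smult (?a j * ?W j k) (gfact m \<alpha> k)) = smult (WLah m \<alpha> n k) (gfact m \<alpha> k)"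
      by (metis smult_sum)
  qed
  finally show ?thesis .
qed

lemma WLah_big: "n < k \<Longrightarrow> WLah m \<alpha> n k = 0"
  by (simp add: WLah_def)

lemma rec_all:
  fixes m :: real
  assumes "k \<le> Suc n"
  shows "WLah m \<alpha> (Suc n) k = (if k = 0 then 0 else WLah m \<alpha> n (k - 1))
      + (\<alpha> k + \<alpha> n + (real k + real n) * m) * WLah m \<alpha> n k"
proof -
  let ?L = "WLah m \<alpha> n"
  let ?g = "gfact m \<alpha>"
  let ?c = "\<lambda>k. \<alpha> k + \<alpha> n + (real k + real n) * m"
  let ?d = "\<lambda>k. (if k = 0 then 0 else ?L (k - 1)) + ?L k * ?c k"
  have lin: "?g k * [:\<alpha> n + real n * m, 1:] = ?g (Suc k) + smult (?c k) (?g k)" for k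
  proof -
    have e: "[:\<alpha> n + real n * m, 1:] = [:- (\<alpha> k + real k * m), 1:] + [:?c k:]"
      by (simp add: algebra_simps)
    have f: "?g (Suc k) + smult (?c k) (?g k) = ?g k * ([:- (\<alpha> k + real k * m), 1:] + [:?c k:])"
      apply (simp add: gfact_Suc distrib_left)
      apply (subst smult_add_left[symmetric])
      by (simp add: algebra_simps)
    show ?thesis unfolding e f ..
  qed
  have "Pr m \<alpha> (Suc n) = (\<Sum>k\<le>n. smult (?L k) (?g k * [:\<alpha> n + real n * m, 1:]))"
    by (simp only: Pr_Suc Pr_WLah[of m \<alpha> n] sum_distrib_right mult_smult_left)
  also have "\<dots> = (\<Sum>k\<le>n. smult (?L k) (?g (Suc k))) + (\<Sum>k\<le>n. smult (?L k * ?c k) (?g k))"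
    by (simp only: lin smult_add_right sum.distrib smult_smult)
  also have "(\<Sum>k\<le>n. smult (?L k) (?g (Suc k))) = (\<Sum>k\<le>Suc n. smult (if k = 0 then 0 else ?L (k - 1)) (?g k))"
    by (subst sum.atMost_Suc_shift) simp
  also have "(\<Sum>k\<le>n. smult (?L k * ?c k) (?g k)) = (\<Sum>k\<le>Suc n. smult (?L k * ?c k) (?g k))"
    by (simp add: WLah_big)
  also have "(\<Sum>k\<le>Suc n. smult (if k = 0 then 0 else ?L (k - 1)) (?g k)) + \<dots>
      = (\<Sum>k\<le>Suc n. smult (?d k) (?g k))"
    by (simp add: sum.distrib[symmetric] smult_add_left)
  finally have "(\<Sum>k\<le>Suc n. smult (WLah m \<alpha> (Suc n) k) (?g k)) = (\<Sum>k\<le>Suc n. smult (?d k) (?g k))"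
    using Pr_WLah[of m \<alpha> "Suc n"] by simp
  from uniq[OF this assms] show ?thesis by (simp add: mult.commute)
qed

theorem mainTheorem10:
  fixes m :: real and \<alpha> :: "nat \<Rightarrow> real"
  shows "(\<forall>n k. 1 \<le> k \<and> k \<le> n \<longrightarrow>
            WLah m \<alpha> (n + 1) k = WLah m \<alpha> n (k - 1)
              + (\<alpha> k + \<alpha> n + (real k + real n) * m) * WLah m \<alpha> n k)
       \<and> (\<forall>n. WLah m \<alpha> n 0 = (\<Prod>i<n. \<alpha> 0 + \<alpha> i + real i * m))"
proof (intro conjI allI impI)
  fix n k :: nat assume "1 \<le> k \<and> k \<le> n"
  then show "WLah m \<alpha> (n + 1) k = WLah m \<alpha> n (k - 1)
              + (\<alpha> k + \<alpha> n + (real k + real n) * m) * WLah m \<alpha> n k"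
    using rec_all[of k n m \<alpha>] by simp
next
  fix n
  show "WLah m \<alpha> n 0 = (\<Prod>i<n. \<alpha> 0 + \<alpha> i + real i * m)"
  proof (induction n)
    case 0
    have "(\<Sum>k\<le>0. smult (WLah m \<alpha> 0 k) (gfact m \<alpha> k)) = (\<Sum>k\<le>0. smult 1 (gfact m \<alpha> k))"
      using Pr_WLah[of m \<alpha> 0] by (simp add: Pr_def)
    from uniq[OF this] show ?case by simp
  next
    case (Suc n)
    then show ?case using rec_all[of 0 n m \<alpha>] by (simp add: mult.commute)
  qed
qed

end
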